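(* For every rational number $q\in\mathbb{Q}$ there exists a connected graph $G$ with $\iota(G)=q$.
   Context: For a connected graph $G$ on vertices $v_1,\dots,v_n$, its distance matrix is $D=(d(v_i,v_j))_{i,j=1}^n$, where $d$ is the shortest-path distance; $\vec 1$ denotes the all-ones vector. $G$ is distance exceptional if $D\vec x=\vec 1$ has no solution. A curvature potential is a vector $\vec x$ with $D\vec x=\vec 1$. Curvature index $\iota(G)\in\mathbb{R}\cup\{\infty\}$: if $G$ is distance exceptional or has a curvature potential $\vec x$ with $\vec 1^\top\vec x\neq0$, then $\iota(G)$ is the unique real number with $\{D\vec x:\vec 1^\top\vec x=1\}\cap\mathbb{R}\vec 1=\{\iota(G)\vec 1\}$; otherwise $\iota(G)=\infty$. *)

theory Defs
  imports Complex_Main "HOL-Library.Extended_Real"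
begin

definition simple_graph :: "nat \<Rightarrow> (nat \<Rightarrow> nat \<Rightarrow> bool) \<Rightarrow> bool" where
  "simple_graph n E \<longleftrightarrow>
     (\<forall>u v. E u v \<longrightarrow> u < n \<and> v < n \<and> u \<noteq> v) \<and> (\<forall>u v. E u v \<longrightarrow> E v u)"

definition is_walk :: "(nat \<Rightarrow> nat \<Rightarrow> bool) \<Rightarrow> nat list \<Rightarrow> bool" where
  "is_walk E p \<longleftrightarrow> p \<noteq> [] \<and> (\<forall>i. i + 1 < length p \<longrightarrow> E (p ! i) (p ! (i + 1)))"

definition connected_graph :: "nat \<Rightarrow> (nat \<Rightarrow> nat \<Rightarrow> bool) \<Rightarrow> bool" where
  "connected_graph n E \<longleftrightarrow> simple_graph n E \<and> n \<ge> 1 \<and>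
     (\<forall>u < n. \<forall>v < n. \<exists>p. is_walk E p \<and> hd p = u \<and> last p = v)"

definition gdist :: "(nat \<Rightarrow> nat \<Rightarrow> bool) \<Rightarrow> nat \<Rightarrow> nat \<Rightarrow> nat" where
  "gdist E u v = (LEAST k. \<exists>p. is_walk E p \<and> hd p = u \<and> last p = v \<and> length p = k + 1)"

definition dist_mult :: "nat \<Rightarrow> (nat \<Rightarrow> nat \<Rightarrow> bool) \<Rightarrow> (nat \<Rightarrow> real) \<Rightarrow> nat \<Rightarrow> real" where
  "dist_mult n E x i = (\<Sum>j<n. real (gdist E i j) * x j)"

definition curvature_potential :: "nat \<Rightarrow> (nat \<Rightarrow> nat \<Rightarrow> bool) \<Rightarrow> (nat \<Rightarrow> real) \<Rightarrow> bool" where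
  "curvature_potential n E x \<longleftrightarrow> (\<forall>i < n. dist_mult n E x i = 1)"

definition distance_exceptional :: "nat \<Rightarrow> (nat \<Rightarrow> nat \<Rightarrow> bool) \<Rightarrow> bool" where
  "distance_exceptional n E \<longleftrightarrow> \<not> (\<exists>x. curvature_potential n E x)"

text \<open>Curvature index, with value \<infinity> represented by the extended real PInfty.
  The set {c. c*1 \<in> {D x : 1^T x = 1}} corresponds to
  {D x : 1^T x = 1} \<inter> R 1 via c \<mapsto> c*1.\<close>
definition curvature_index :: "nat \<Rightarrow> (nat \<Rightarrow> nat \<Rightarrow> bool) \<Rightarrow> ereal" where
  "curvature_index n E =
     (if distance_exceptional n E \<or> (\<exists>x. curvature_potential n E x \<and> (\<Sum>j<n. x j) \<noteq> 0)
      then ereal (THE r. {c. \<exists>x. (\<Sum>j<n. x j) = 1 \<and> (\<forall>i<n. dist_mult n E x i = c)} = {r})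
      else PInfty)"

end

theory Submission
  imports Defs
begin

lemma gdist_le:
  assumes "is_walk E p" "hd p = u" "last p = v"
  shows "gdist E u v \<le> length p - 1"
proof -
  have "p \<noteq> []" using assms(1) by (simp add: is_walk_def)
  then have "\<exists>p'. is_walk E p' \<and> hd p' = u \<and> last p' = v \<and> length p' = (length p - 1) + 1"
    using assms by (intro exI[of _ p]) auto
  then show ?thesis unfolding gdist_def by (rule Least_le)
qed

lemma gdist_ex:
  assumes "is_walk E p" "hd p = u" "last p = v"
  shows "\<exists>p. is_walk E p \<and> hd p = u \<and> last p = v \<and> length p = gdist E u v + 1"
proof -
  have "p \<noteq> []" using assms(1) by (simp add: is_walk_def)
  then have "\<exists>k p'. is_walk E p' \<and> hd p' = u \<and> last p' = v \<and> length p' = k + 1"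
    using assms by (intro exI[of _ "length p - 1"] exI[of _ p]) auto
  then show ?thesis unfolding gdist_def by (rule LeastI_ex)
qed

lemma gdist_0: "gdist E u u = 0"
  using gdist_le[of E "[u]" u u] by (simp add: is_walk_def)

lemma walk2: "is_walk E [u, v] \<longleftrightarrow> E u v"
  by (auto simp: is_walk_def less_Suc_eq)

lemma walk3: "E u w \<Longrightarrow> E w v \<Longrightarrow> is_walk E [u, w, v]"
  by (auto simp: is_walk_def less_Suc_eq nth_Cons split: nat.splits)

lemma len1: "length p = 1 \<Longrightarrow> hd p = last p"
  by (cases p) auto

lemma len2: "length p = 2 \<Longrightarrow> p = [hd p, last p]"
  by (cases p; cases "tl p") auto

lemma gdist_1:
  assumes "E u v" "u \<noteq> v"
  shows "gdist E u v = 1"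
proof -
  have w: "is_walk E [u, v]" using assms walk2 by metis
  have "gdist E u v \<le> 1" using gdist_le[OF w refl refl] by simp
  moreover obtain p where "is_walk E p" "hd p = u" "last p = v" "length p = gdist E u v + 1"
    using gdist_ex[OF w] by auto
  then have "gdist E u v \<noteq> 0" using len1 assms(2) by force
  ultimately show ?thesis by simp
qed

lemma gdist_2:
  assumes "\<not> E u v" "u \<noteq> v" "E u w" "E w v"
  shows "gdist E u v = 2"
proof -
  have w: "is_walk E [u, w, v]" using assms walk3 by metis
  have "gdist E u v \<le> 2" using gdist_le[OF w refl refl] by simp
  moreover obtain p where p: "is_walk E p" "hd p = u" "last p = v" "length p = gdist E u v + 1"
    using gdist_ex[OF w] by auto
  then have "gdist E u v \<noteq> 0" using len1 assms(2) by force
  moreover have "gdist E u v \<noteq> 1"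
  proof
    assume "gdist E u v = 1"
    then have "p = [u, v]" using len2[of p] p by simp
    then show False using p(1) walk2 assms(1) by metis
  qed
  ultimately show ?thesis by simp
qed


lemma div_iff_nat: "(0::nat) < s \<Longrightarrow> (m div s = k) \<longleftrightarrow> (k*s \<le> m \<and> m < k*s + s)"
  by (metis add.commute div_nat_eqI dividend_less_div_times mult.commute
    mult_Suc times_div_less_eq_dividend)

definition prt :: "nat \<Rightarrow> nat \<Rightarrow> nat \<Rightarrow> nat" where
  "prt p s v = (if v < p then v else p + (v - p) div s)"

definition mpE :: "nat \<Rightarrow> nat \<Rightarrow> nat \<Rightarrow> nat \<Rightarrow> nat \<Rightarrow> bool" where
  "mpE p s n u v \<longleftrightarrow> u < n \<and> v < n \<and> prt p s u \<noteq> prt p s v"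

lemma prt_ge: "\<not> v < p \<Longrightarrow> prt p s v \<ge> p"
  by (simp add: prt_def)

lemma prt_lt: "v < p \<Longrightarrow> prt p s v = v"
  by (simp add: prt_def)

lemma mp_dist:
  assumes "p \<ge> 2" "p \<le> n" "i < n" "j < n"
  shows "gdist (mpE p s n) i j = (if i = j then 0 else if prt p s i \<noteq> prt p s j then 1 else 2)"
proof (cases "i = j")
  case True then show ?thesis by (simp add: gdist_0)
next
  case ne: False
  show ?thesis
  proof (cases "prt p s i \<noteq> prt p s j")
    case True
    then show ?thesis using ne assms by (simp add: gdist_1 mpE_def)
  next
    case False
    have ip: "\<not> i < p" and jp: "\<not> j < p"
      using False ne prt_ge[of _ p s] prt_lt[of _ p s] by (metis not_le)+
    have "mpE p s n i 0" "mpE p s n 0 j"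
      using ip jp assms prt_ge[OF ip, of s] prt_ge[OF jp, of s] prt_lt[of 0 p s] by (auto simp: mpE_def)
    moreover have "\<not> mpE p s n i j" using False by (simp add: mpE_def)
    ultimately show ?thesis using False ne gdist_2[of "mpE p s n" i j 0] by simp
  qed
qed

lemma mp_connected:
  assumes "p \<ge> 2" "p \<le> n"
  shows "connected_graph n (mpE p s n)"
  unfolding connected_graph_def
proof (intro conjI allI impI)
  show "simple_graph n (mpE p s n)" by (auto simp: simple_graph_def mpE_def)
  show "1 \<le> n" using assms by simp
next
  fix u v assume uv: "u < n" "v < n"
  show "\<exists>p'. is_walk (mpE p s n) p' \<and> hd p' = u \<and> last p' = v"
  proof (cases "u = v")
    case True then show ?thesis by (intro exI[of _ "[u]"]) (simp add: is_walk_def)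
  next
    case ne: False
    show ?thesis
    proof (cases "mpE p s n u v")
      case True then show ?thesis by (intro exI[of _ "[u,v]"]) (simp add: walk2)
    next
      case False
      then have ip: "\<not> u < p" and jp: "\<not> v < p"
        using ne uv prt_ge[of _ p s] prt_lt[of _ p s] unfolding mpE_def by (metis not_le)+
      have "mpE p s n u 0" "mpE p s n 0 v"
        using ip jp assms uv prt_ge[OF ip, of s] prt_ge[OF jp, of s] prt_lt[of 0 p s] by (auto simp: mpE_def)
      then show ?thesis by (intro exI[of _ "[u,0,v]"]) (simp add: walk3)
    qed
  qed
qed


lemma ci_lemma:
  assumes sym: "\<forall>i<n. \<forall>j<n. gdist E i j = gdist E j i"
    and pot: "curvature_potential n E x" and S: "(\<Sum>j<n. x j) \<noteq> 0"
  shows "curvature_index n E = ereal (1 / (\<Sum>j<n. x j))"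
proof -
  define S where "S = (\<Sum>j<n. x j)"
  have Sne: "S \<noteq> 0" using S by (simp add: S_def)
  have dx: "\<And>i. i < n \<Longrightarrow> dist_mult n E x i = 1" using pot by (simp add: curvature_potential_def)
  have swap: "(\<Sum>i<n. x i * dist_mult n E y i) = (\<Sum>j<n. y j * dist_mult n E x j)" for y
  proof -
    have "(\<Sum>i<n. x i * dist_mult n E y i) = (\<Sum>i<n. \<Sum>j<n. x i * real (gdist E i j) * y j)"
      by (simp add: dist_mult_def sum_distrib_left mult.assoc)
    also have "\<dots> = (\<Sum>j<n. \<Sum>i<n. x i * real (gdist E i j) * y j)"
      by (rule sum.swap)
    also have "\<dots> = (\<Sum>j<n. \<Sum>i<n. y j * (real (gdist E j i) * x i))"
      using sym by (intro sum.cong refl) (simp add: mult_ac)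
    also have "\<dots> = (\<Sum>j<n. y j * dist_mult n E x j)"
      by (simp add: dist_mult_def sum_distrib_left)
    finally show ?thesis .
  qed
  have set: "{c. \<exists>y. (\<Sum>j<n. y j) = 1 \<and> (\<forall>i<n. dist_mult n E y i = c)} = {1 / S}"
  proof (intro equalityI subsetI)
    fix c assume "c \<in> {c. \<exists>y. (\<Sum>j<n. y j) = 1 \<and> (\<forall>i<n. dist_mult n E y i = c)}"
    then obtain y where y1: "(\<Sum>j<n. y j) = 1" and yc: "\<forall>i<n. dist_mult n E y i = c" by auto
    have "(\<Sum>i<n. x i * dist_mult n E y i) = (\<Sum>i<n. x i * c)"
      using yc by (intro sum.cong) auto
    also have "\<dots> = c * S" by (simp add: S_def sum_distrib_left mult.commute)
    finally have a: "(\<Sum>i<n. x i * dist_mult n E y i) = c * S" .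
    have "(\<Sum>j<n. y j * dist_mult n E x j) = (\<Sum>j<n. y j)"
      using dx by (intro sum.cong) auto
    then have "c * S = 1" using a swap y1 by simp
    then show "c \<in> {1 / S}" using Sne by (simp add: field_simps)
  next
    fix c assume "c \<in> {1 / S}"
    then have c: "c = 1 / S" by simp
    have "(\<Sum>j<n. x j / S) = 1" using Sne by (simp add: S_def sum_divide_distrib[symmetric])
    moreover have "\<forall>i<n. dist_mult n E (\<lambda>j. x j / S) i = c"
    proof (intro allI impI)
      fix i assume "i < n"
      have "dist_mult n E (\<lambda>j. x j / S) i = dist_mult n E x i / S"
        by (simp add: dist_mult_def sum_divide_distrib)
      then show "dist_mult n E (\<lambda>j. x j / S) i = c" using dx[OF \<open>i < n\<close>] c by simp
    qed
    ultimately show "c \<in> {c. \<exists>y. (\<Sum>j<n. y j) = 1 \<and> (\<forall>i<n. dist_mult n E y i = c)}" by blast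
  qed
  have cond: "distance_exceptional n E \<or> (\<exists>x. curvature_potential n E x \<and> (\<Sum>j<n. x j) \<noteq> 0)"
    using pot S by blast
  show ?thesis unfolding curvature_index_def using cond set
    by (simp add: S_def)
qed


lemma mp_row:
  assumes p2: "p \<ge> 2" and s1: "s \<ge> 1" and n: "n = p + r * s" and i: "i < n"
  shows "dist_mult n (mpE p s n) (\<lambda>j. if j < p then \<alpha> else \<beta>) i =
    (if i < p then (real p - 1) * \<alpha> + real (r * s) * \<beta>
     else real p * \<alpha> + (real (r * s) + real s - 2) * \<beta>)"
proof -
  define d where "d j = (if i = j then 0 else if prt p s i \<noteq> prt p s j then 1 else 2::nat)" for j
  have pn: "p \<le> n" using n by simp
  have "dist_mult n (mpE p s n) (\<lambda>j. if j < p then \<alpha> else \<beta>) i =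
      (\<Sum>j<n. real (d j) * (if j < p then \<alpha> else \<beta>))"
    unfolding dist_mult_def using mp_dist[OF p2 pn i] by (intro sum.cong) (auto simp: d_def)
  also have "\<dots> = (\<Sum>j<p. real (d j) * \<alpha>) + (\<Sum>j\<in>{p..<n}. real (d j) * \<beta>)"
  proof -
    have "(\<Sum>j<n. real (d j) * (if j < p then \<alpha> else \<beta>)) =
        (\<Sum>j\<in>{0..<p}. real (d j) * (if j < p then \<alpha> else \<beta>)) +
        (\<Sum>j\<in>{p..<n}. real (d j) * (if j < p then \<alpha> else \<beta>))"
      unfolding lessThan_atLeast0 by (rule sym, rule sum.atLeastLessThan_concat) (use pn in auto)
    also have "\<dots> = (\<Sum>j<p. real (d j) * \<alpha>) + (\<Sum>j\<in>{p..<n}. real (d j) * \<beta>)"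
      unfolding lessThan_atLeast0 by (intro arg_cong2[where f="(+)"] sum.cong) auto
    finally show ?thesis .
  qed
  also have "\<dots> = (if i < p then (real p - 1) * \<alpha> + real (r * s) * \<beta>
     else real p * \<alpha> + (real (r * s) + real s - 2) * \<beta>)"
  proof (cases "i < p")
    case True
    have a: "(\<Sum>j<p. real (d j) * \<alpha>) = (\<Sum>j<p. \<alpha> - (if i = j then \<alpha> else 0))"
      using True by (intro sum.cong) (auto simp: d_def prt_lt)
    have b: "(\<Sum>j\<in>{p..<n}. real (d j) * \<beta>) = (\<Sum>j\<in>{p..<n}. \<beta>)"
    proof (intro sum.cong refl)
      fix j assume "j \<in> {p..<n}"
      then have "\<not> j < p" by simp
      then have "prt p s j \<noteq> prt p s i" using prt_ge[of j p s] prt_lt[of i p s] True by simp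
      then show "real (d j) * \<beta> = \<beta>" by (auto simp: d_def)
    qed
    show ?thesis using True p2 unfolding a b by (simp add: sum_subtractf n algebra_simps)
  next
    case False
    define k where "k = (i - p) div s"
    define B where "B = {p + k * s ..< p + k * s + s}"
    have s0: "0 < s" using s1 by simp
    have kr: "k < r" unfolding k_def using i n False s0
      by (simp add: less_mult_imp_div_less)
    have "k * s + s \<le> r * s" using kr
      by (metis Suc_leI add.commute mult_Suc mult_le_mono1)
    then have Bsub: "B \<subseteq> {p..<n}" unfolding B_def n by auto
    have inB: "j \<in> B \<longleftrightarrow> prt p s j = prt p s i" if "j \<in> {p..<n}" for j
    proof -
      have "prt p s j = prt p s i \<longleftrightarrow> (j - p) div s = k"
        using that False by (simp add: prt_def k_def)
      also have "\<dots> \<longleftrightarrow> k * s \<le> j - p \<and> j - p < k * s + s" by (rule div_iff_nat[OF s0])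
      also have "\<dots> \<longleftrightarrow> j \<in> B" using that by (auto simp: B_def)
      finally show ?thesis by simp
    qed
    have a: "(\<Sum>j<p. real (d j) * \<alpha>) = (\<Sum>j<p. \<alpha>)"
    proof (intro sum.cong refl)
      fix j assume "j \<in> {..<p}"
      then have "j < p" by simp
      then have "prt p s j \<noteq> prt p s i" using prt_ge[of i p s] prt_lt[of j p s] False by simp
      then show "real (d j) * \<alpha> = \<alpha>" by (auto simp: d_def)
    qed
    have iB: "i \<in> {p..<n}" using False i by simp
    have b: "(\<Sum>j\<in>{p..<n}. real (d j) * \<beta>) =
        (\<Sum>j\<in>{p..<n}. \<beta> + (if j \<in> B then \<beta> else 0) - (if i = j then 2 * \<beta> else 0))"
    proof (intro sum.cong refl)
      fix j assume j: "j \<in> {p..<n}"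
      show "real (d j) * \<beta> = \<beta> + (if j \<in> B then \<beta> else 0) - (if i = j then 2 * \<beta> else 0)"
        using inB[OF j] inB[OF iB] by (auto simp: d_def)
    qed
    have c: "(\<Sum>j\<in>{p..<n}. (if j \<in> B then \<beta> else 0)) = real s * \<beta>"
    proof -
      have "(\<Sum>j\<in>{p..<n}. (if j \<in> B then \<beta> else 0)) = (\<Sum>j\<in>{p..<n} \<inter> B. \<beta>)"
        by (simp only: sum.inter_restrict[symmetric] finite_atLeastLessThan)
      also have "{p..<n} \<inter> B = B" using Bsub by auto
      finally show ?thesis by (simp add: B_def)
    qed
    have e: "(\<Sum>j\<in>{p..<n}. (if i = j then 2 * \<beta> else 0)) = 2 * \<beta>"
      using iB by simp
    have "(\<Sum>j\<in>{p..<n}. \<beta> + (if j \<in> B then \<beta> else 0) - (if i = j then 2 * \<beta> else 0))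
       = real (n - p) * \<beta> + real s * \<beta> - 2 * \<beta>"
      unfolding sum_subtractf sum.distrib c e by simp
    then show ?thesis using False unfolding a b
      by (simp add: n algebra_simps)
  qed
  finally show ?thesis .
qed


lemma mp_family:
  assumes p2: "p \<ge> 2" and s1: "s \<ge> 1"
    and eq1: "(real p - 1) * \<alpha> + real (r * s) * \<beta> = 1"
    and eq2: "real p * \<alpha> + (real (r * s) + real s - 2) * \<beta> = 1"
    and S: "real p * \<alpha> + real (r * s) * \<beta> \<noteq> 0"
  shows "\<exists>n E. connected_graph n E \<and>
    curvature_index n E = ereal (1 / (real p * \<alpha> + real (r * s) * \<beta>))"
proof -
  define n where "n = p + r * s"
  define x where "x = (\<lambda>j. if j < p then \<alpha> else \<beta>)"
  have pn: "p \<le> n" by (simp add: n_def)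
  have pot: "curvature_potential n (mpE p s n) x"
    unfolding curvature_potential_def x_def
    using mp_row[OF p2 s1 n_def] eq1 eq2 by simp
  have sum: "(\<Sum>j<n. x j) = real p * \<alpha> + real (r * s) * \<beta>"
  proof -
    have "(\<Sum>j<n. x j) = (\<Sum>j\<in>{0..<p}. x j) + (\<Sum>j\<in>{p..<n}. x j)"
      unfolding lessThan_atLeast0 by (rule sym, rule sum.atLeastLessThan_concat) (use pn in auto)
    also have "\<dots> = (\<Sum>j\<in>{0..<p}. \<alpha>) + (\<Sum>j\<in>{p..<n}. \<beta>)"
      by (intro arg_cong2[where f="(+)"] sum.cong) (auto simp: x_def)
    finally show ?thesis by (simp add: n_def)
  qed
  have sym: "\<forall>i<n. \<forall>j<n. gdist (mpE p s n) i j = gdist (mpE p s n) j i"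
    using mp_dist[OF p2 pn] by simp
  show ?thesis
    using ci_lemma[OF sym pot] sum S mp_connected[OF p2 pn] by auto
qed

lemma comb: fixes D a b W :: real assumes "D \<noteq> 0"
  shows "a * (- W / D) + b * (1 / (2 * D)) = (b - 2 * a * W) / (2 * D)"
  using assms by (simp add: field_simps)
lemma l1: fixes U W M R :: real assumes D: "U + W \<noteq> 0" and R: "R = U + M * W"
  shows "(R + M - 1) * (- W / (U + W)) + R * (2 * W + 2) * (1 / (2 * (U + W))) = 1"
  unfolding comb[OF D] using D unfolding R by (simp add: algebra_simps)
lemma l2: fixes U W M R :: real assumes D: "U + W \<noteq> 0" and R: "R = U + M * W"
  shows "(R + M) * (- W / (U + W)) + (R * (2 * W + 2) + (2 * W + 2) - 2) * (1 / (2 * (U + W))) = 1"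
  unfolding comb[OF D] using D unfolding R by (simp add: algebra_simps)
lemma l3: fixes U W M R :: real assumes D: "U + W \<noteq> 0" and R: "R = U + M * W"
  shows "(R + M) * (- W / (U + W)) + R * (2 * W + 2) * (1 / (2 * (U + W))) = U / (U + W)"
  unfolding comb[OF D] using D unfolding R by (simp add: field_simps)

lemma int_family:
  fixes u w :: int
  assumes w1: "w \<ge> 1" and u0: "u \<noteq> 0" and uw: "u + w \<noteq> 0"
  shows "\<exists>n E. connected_graph n E \<and> curvature_index n E = ereal (1 + of_int w / of_int u)"
proof -
  define M :: int where "M = \<bar>u\<bar> + 1"
  have M0: "M \<ge> 1" by (simp add: M_def)
  have "M * w \<ge> M" using mult_left_mono[of 1 w M] w1 M0 by simp
  then have R1: "u + M * w \<ge> 1" using abs_ge_minus_self[of u] unfolding M_def by linarith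
  define r where "r = nat (u + M * w)"
  define p where "p = r + nat M"
  define s where "s = nat (2 * w + 2)"
  define \<alpha> :: real where "\<alpha> = - of_int w / of_int (u + w)"
  define \<beta> :: real where "\<beta> = 1 / (2 * of_int (u + w))"
  have rr: "real r = of_int u + of_int M * of_int w" using R1 by (simp add: r_def)
  have pp: "real p = real r + of_int M" using M0 by (simp add: p_def)
  have ss: "real s = 2 * of_int w + 2" using w1 by (simp add: s_def)
  have p2: "p \<ge> 2" using R1 M0 unfolding p_def r_def by linarith
  have s1: "s \<ge> 1" using w1 unfolding s_def by linarith
  have uwr: "(of_int u + of_int w :: real) \<noteq> 0" using uw by (metis of_int_add of_int_eq_0_iff)
  have u0r: "(of_int u :: real) \<noteq> 0" using u0 by simp
  have eq1: "(real p - 1) * \<alpha> + real (r * s) * \<beta> = 1"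
    unfolding of_nat_mult pp ss \<alpha>_def \<beta>_def of_int_add using l1[OF uwr rr] by simp
  have eq2: "real p * \<alpha> + (real (r * s) + real s - 2) * \<beta> = 1"
    unfolding of_nat_mult pp ss \<alpha>_def \<beta>_def of_int_add using l2[OF uwr rr] by simp
  have Sv: "real p * \<alpha> + real (r * s) * \<beta> = of_int u / (of_int u + of_int w)"
    unfolding of_nat_mult pp ss \<alpha>_def \<beta>_def of_int_add using l3[OF uwr rr] by simp
  have S: "real p * \<alpha> + real (r * s) * \<beta> \<noteq> 0" using Sv uwr u0r by simp
  have "1 / (real p * \<alpha> + real (r * s) * \<beta>) = (of_int u + of_int w) / of_int u"
    unfolding Sv by simp
  also have "\<dots> = 1 + of_int w / of_int u" using u0r by (simp add: field_simps)
  finally have "1 / (real p * \<alpha> + real (r * s) * \<beta>) = 1 + of_int w / of_int u" .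
  then show ?thesis using mp_family[OF p2 s1 eq1 eq2 S] by simp
qed


lemma K1: "\<exists>n E. connected_graph n E \<and> curvature_index n E = ereal 0"
proof -
  define E :: "nat \<Rightarrow> nat \<Rightarrow> bool" where "E = (\<lambda>_ _. False)"
  have con: "connected_graph 1 E"
    unfolding connected_graph_def simple_graph_def E_def
    by (auto intro!: exI[of _ "[0]"] simp: is_walk_def)
  have dm: "dist_mult 1 E x 0 = 0" for x by (simp add: dist_mult_def gdist_0)
  have ex: "distance_exceptional 1 E"
    unfolding distance_exceptional_def curvature_potential_def using dm by auto
  have set: "{c. \<exists>x. (\<Sum>j<1. x j) = 1 \<and> (\<forall>i<1. dist_mult 1 E x i = c)} = {0}"
  proof (intro equalityI subsetI)
    fix c assume "c \<in> {c. \<exists>x. (\<Sum>j<1. x j) = 1 \<and> (\<forall>i<1. dist_mult 1 E x i = c)}"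
    then show "c \<in> {0}" using dm by auto
  next
    fix c :: real assume "c \<in> {0}"
    then show "c \<in> {c. \<exists>x. (\<Sum>j<(1::nat). x j) = 1 \<and> (\<forall>i<1. dist_mult 1 E x i = c)}"
      using dm by (auto intro!: exI[of _ "\<lambda>_. 1"])
  qed
  have "curvature_index 1 E = ereal 0"
    unfolding curvature_index_def using ex set by simp
  then show ?thesis using con by blast
qed

theorem theorem5p2:
  fixes q :: rat
  shows "\<exists>n E. connected_graph n E \<and> curvature_index n E = ereal (of_rat q)"
proof -
  obtain a b where qa: "quotient_of q = (a, b)" by (cases "quotient_of q") auto
  have b0: "b > 0" using quotient_of_denom_pos[OF qa] .
  have qv: "(of_rat q :: real) = of_int a / of_int b"
    using quotient_of_div[OF qa] by (simp add: of_rat_divide)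
  have br: "(of_int b :: real) \<noteq> 0" using b0 by simp
  show ?thesis
  proof (cases "a = 0")
    case True
    then show ?thesis using K1 qv by simp
  next
    case a0: False
    show ?thesis
    proof (cases "a = b")
      case True
      have q1: "(of_rat q :: real) = 1" using qv True br by simp
      have "\<exists>n E. connected_graph n E \<and>
        curvature_index n E = ereal (1 / (real 2 * 0 + real (1 * 2) * (1/2)))"
        by (rule mp_family) auto
      then show ?thesis using q1 by simp
    next
      case ne: False
      show ?thesis
      proof (cases "a > b")
        case True
        have "\<exists>n E. connected_graph n E \<and> curvature_index n E = ereal (1 + of_int (a - b) / of_int b)"
          by (rule int_family) (use True b0 a0 in auto)
        moreover have "1 + of_int (a - b) / of_int b = (of_int a / of_int b :: real)"
          using br by (simp add: field_simps)
        ultimately show ?thesis using qv by simp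
      next
        case False
        have "\<exists>n E. connected_graph n E \<and> curvature_index n E = ereal (1 + of_int (b - a) / of_int (- b))"
          by (rule int_family) (use False ne b0 a0 in auto)
        moreover have "1 + of_int (b - a) / of_int (- b) = (of_int a / of_int b :: real)"
          using br by (simp add: field_simps)
        ultimately show ?thesis using qv by simp
      qed
    qed
  qed
qed

end
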